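(* Let $b>a>0$, $c>0$, $u_L<0$, $\bar\Delta_H,\bar\Delta_L>0$, $L_0>0$, and $L_t=L_0e^{(b-a)t}$. The integro-differential equation $$\rho'(t)=\frac{b(-u_L)-c-L_tc+b\bar\Delta_L\int_0^te^{-bs}\rho'(s)\,ds-L_t\bar\Delta_Hae^{-at}(1-\rho(t))}{L_t\bar\Delta_He^{-at}+\bar\Delta_Le^{-bt}}$$ with initial condition $\rho(0)=0$ has a unique (continuously differentiable) solution defined for all $t\in[0,\infty)$.
   Context: Here $L_0=\frac{p_0}{1-p_0}$ is the prior likelihood ratio of state $H$; the equation expresses that a player is indifferent between taking $R$ now and continuing to acquire information when the opponent stops with $R$ according to $\rho$. *)

theory Defs
  imports "HOL-Analysis.Analysis"
begin

definition Lpath :: "real \<Rightarrow> real \<Rightarrow> real \<Rightarrow> real \<Rightarrow> real" where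
  "Lpath a b L0 t = L0 * exp ((b - a) * t)"

definition is_solution ::
  "real \<Rightarrow> real \<Rightarrow> real \<Rightarrow> real \<Rightarrow> real \<Rightarrow> real \<Rightarrow> real \<Rightarrow>
   (real \<Rightarrow> real) \<Rightarrow> (real \<Rightarrow> real) \<Rightarrow> bool" where
  "is_solution a b c uL DH DL L0 \<rho> \<rho>' \<longleftrightarrow>
     \<rho> 0 = 0 \<and>
     continuous_on {0..} \<rho>' \<and>
     (\<forall>t\<ge>0. (\<rho> has_real_derivative \<rho>' t) (at t within {0..})) \<and>
     (\<forall>t\<ge>0. \<rho>' t =
        (b * (- uL) - c - Lpath a b L0 t * c
          + b * DL * integral {0..t} (\<lambda>s. exp (- b * s) * \<rho>' s)
          - Lpath a b L0 t * DH * a * exp (- a * t) * (1 - \<rho> t))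
        / (Lpath a b L0 t * DH * exp (- a * t) + DL * exp (- b * t)))"

end

theory Submission
  imports Defs
begin

definition Fop :: "real \<Rightarrow> real \<Rightarrow> real \<Rightarrow> real \<Rightarrow> real \<Rightarrow> real \<Rightarrow> real \<Rightarrow> real \<Rightarrow> (real \<Rightarrow> real) \<Rightarrow> real \<Rightarrow> real" where
  "Fop a b c uL DH DL L0 r u t =
        (b * (- uL) - c - Lpath a b L0 t * c
          + b * DL * integral {0..t} (\<lambda>s. exp (- b * s) * u s)
          - Lpath a b L0 t * DH * a * exp (- a * t) * (1 - r))
        / (Lpath a b L0 t * DH * exp (- a * t) + DL * exp (- b * t))"

lemma exp_int:
  fixes k t :: real
  assumes "k > 0" "t \<ge> 0"
  shows "((\<lambda>s. exp (k * s)) has_integral (exp (k * t) - 1) / k) {0..t}"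
proof -
  have "((\<lambda>s. exp (k * s)) has_integral (exp (k * t) / k - exp (k * 0) / k)) {0..t}"
  proof (rule fundamental_theorem_of_calculus)
    fix x assume "x \<in> {0..t}"
    have "((\<lambda>s. exp (k * s) / k) has_real_derivative exp (k * x)) (at x within {0..t})"
      using assms by (auto intro!: derivative_eq_intros)
    then show "((\<lambda>s. exp (k * s) / k) has_vector_derivative exp (k * x)) (at x within {0..t})"
      by (simp add: has_real_derivative_iff_has_vector_derivative)
  qed (use assms in auto)
  then show ?thesis by (simp add: diff_divide_distrib)
qed

lemma exp_int_le:
  fixes k t :: real
  assumes "k > 0" "t \<ge> 0"
  shows "(\<lambda>s. exp (k * s)) integrable_on {0..t}" "integral {0..t} (\<lambda>s. exp (k * s)) \<le> exp (k * t) / k"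
  using exp_int[OF assms] assms by (auto simp: has_integral_iff divide_right_mono)


lemma est:
  fixes a b c uL DH DL L0 M m t r1 r2 :: real and u1 u2 :: "real \<Rightarrow> real"
  assumes "b > a" and "a > 0" and "DH > 0" and "DL > 0" and "L0 > 0"
    and "M > b" and "t \<ge> 0"
    and c1: "continuous_on {0..t} u1" and c2: "continuous_on {0..t} u2"
    and bd: "\<And>s. s \<in> {0..t} \<Longrightarrow> \<bar>u1 s - u2 s\<bar> \<le> m * exp (M * s)"
    and r: "r1 - r2 = integral {0..t} (\<lambda>s. u1 s - u2 s)"
  shows "\<bar>Fop a b c uL DH DL L0 r1 u1 t - Fop a b c uL DH DL L0 r2 u2 t\<bar>
           \<le> (b / (M - b) + a / M) * m * exp (M * t)"
proof -
  have m0: "m \<ge> 0"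
  proof -
    have "\<bar>u1 0 - u2 0\<bar> \<le> m" using bd[of 0] \<open>t \<ge> 0\<close> by simp
    then show ?thesis using abs_ge_zero[of "u1 0 - u2 0"] by linarith
  qed
  define P where "P = Lpath a b L0 t * DH * exp (- a * t)"
  define E where "E = DL * exp (- b * t)"
  have P0: "P > 0" using assms by (simp add: P_def Lpath_def)
  have E0: "E > 0" using assms by (simp add: E_def)
  have i1: "(\<lambda>s. exp (- b * s) * u1 s) integrable_on {0..t}"
    by (intro integrable_continuous_interval continuous_intros c1)
  have i2: "(\<lambda>s. exp (- b * s) * u2 s) integrable_on {0..t}"
    by (intro integrable_continuous_interval continuous_intros c2)
  have id: "(\<lambda>s. u1 s - u2 s) integrable_on {0..t}"
    by (intro integrable_continuous_interval continuous_intros c1 c2)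
  define d1 where "d1 = integral {0..t} (\<lambda>s. exp (- b * s) * u1 s) - integral {0..t} (\<lambda>s. exp (- b * s) * u2 s)"
  have d1e: "d1 = integral {0..t} (\<lambda>s. exp (- b * s) * (u1 s - u2 s))"
    unfolding d1_def using integral_diff[OF i1 i2] by (simp add: right_diff_distrib)
  have Mb: "M - b > 0" using assms by simp
  have "\<bar>d1\<bar> \<le> integral {0..t} (\<lambda>s. m * exp ((M - b) * s))"
    unfolding d1e real_norm_def[symmetric]
  proof (rule integral_norm_bound_integral)
    show "(\<lambda>s. exp (- b * s) * (u1 s - u2 s)) integrable_on {0..t}"
      by (intro integrable_continuous_interval continuous_intros c1 c2)
    show "(\<lambda>s. m * exp ((M - b) * s)) integrable_on {0..t}"
      by (intro integrable_continuous_interval continuous_intros)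
    fix s assume s: "s \<in> {0..t}"
    have "norm (exp (- b * s) * (u1 s - u2 s)) = exp (- b * s) * \<bar>u1 s - u2 s\<bar>"
      by (simp add: abs_mult)
    also have "\<dots> \<le> exp (- b * s) * (m * exp (M * s))"
      using bd[OF s] by (simp add: mult_left_mono)
    also have "\<dots> = m * exp ((M - b) * s)"
      by (simp add: algebra_simps flip: exp_add)
    finally show "norm (exp (- b * s) * (u1 s - u2 s)) \<le> m * exp ((M - b) * s)" .
  qed
  also have "\<dots> = m * integral {0..t} (\<lambda>s. exp ((M - b) * s))" by simp
  also have "\<dots> \<le> m * (exp ((M - b) * t) / (M - b))"
    using mult_left_mono[OF exp_int_le(2)[OF Mb \<open>t \<ge> 0\<close>] m0] .
  finally have d1b: "\<bar>d1\<bar> \<le> m * (exp ((M - b) * t) / (M - b))" .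
  have M0: "M > 0" using assms by simp
  have "\<bar>r1 - r2\<bar> \<le> integral {0..t} (\<lambda>s. m * exp (M * s))"
    unfolding r real_norm_def[symmetric]
  proof (rule integral_norm_bound_integral[OF id])
    show "(\<lambda>s. m * exp (M * s)) integrable_on {0..t}"
      by (intro integrable_continuous_interval continuous_intros)
  qed (use bd in auto)
  also have "\<dots> = m * integral {0..t} (\<lambda>s. exp (M * s))" by simp
  also have "\<dots> \<le> m * (exp (M * t) / M)"
    using mult_left_mono[OF exp_int_le(2)[OF M0 \<open>t \<ge> 0\<close>] m0] .
  finally have rb: "\<bar>r1 - r2\<bar> \<le> m * (exp (M * t) / M)" .
  have diff: "Fop a b c uL DH DL L0 r1 u1 t - Fop a b c uL DH DL L0 r2 u2 t
      = (b * DL * d1 + P * a * (r1 - r2)) / (P + E)"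
  proof -
    have "Fop a b c uL DH DL L0 r1 u1 t - Fop a b c uL DH DL L0 r2 u2 t
      = ((b * (- uL) - c - Lpath a b L0 t * c
          + b * DL * integral {0..t} (\<lambda>s. exp (- b * s) * u1 s)
          - P * a * (1 - r1)) - (b * (- uL) - c - Lpath a b L0 t * c
          + b * DL * integral {0..t} (\<lambda>s. exp (- b * s) * u2 s)
          - P * a * (1 - r2))) / (P + E)"
      unfolding Fop_def P_def E_def diff_divide_distrib by (simp add: mult.commute mult.left_commute)
    also have "\<dots> = (b * DL * d1 + P * a * (r1 - r2)) / (P + E)"
      unfolding d1_def by (simp add: algebra_simps)
    finally show ?thesis .
  qed
  have "\<bar>(b * DL * d1 + P * a * (r1 - r2)) / (P + E)\<bar>
      \<le> (b * DL * \<bar>d1\<bar>) / (P + E) + (P * a * \<bar>r1 - r2\<bar>) / (P + E)"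
  proof -
    have "\<bar>(b * DL * d1 + P * a * (r1 - r2)) / (P + E)\<bar> = \<bar>b * DL * d1 + P * a * (r1 - r2)\<bar> / (P + E)"
      using P0 E0 by (simp add: abs_divide)
    also have "\<dots> \<le> (\<bar>b * DL * d1\<bar> + \<bar>P * a * (r1 - r2)\<bar>) / (P + E)"
      using P0 E0 by (intro divide_right_mono abs_triangle_ineq) auto
    also have "\<dots> = (b * DL * \<bar>d1\<bar>) / (P + E) + (P * a * \<bar>r1 - r2\<bar>) / (P + E)"
      using P0 assms by (simp add: abs_mult add_divide_distrib)
    finally show ?thesis .
  qed
  also have "(b * DL * \<bar>d1\<bar>) / (P + E) \<le> b / (M - b) * m * exp (M * t)"
  proof -
    have "(b * DL * \<bar>d1\<bar>) / (P + E) \<le> (b * DL * (m * (exp ((M - b) * t) / (M - b)))) / E"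
      using P0 E0 assms d1b m0 Mb by (intro frac_le mult_left_mono mult_nonneg_nonneg) auto
    also have "\<dots> = b / (M - b) * m * exp (M * t)"
      using assms Mb exp_minus_inverse[of "b * t"] unfolding E_def by (simp add: field_simps left_diff_distrib exp_diff)
    finally show ?thesis .
  qed
  also have "(P * a * \<bar>r1 - r2\<bar>) / (P + E) \<le> a / M * m * exp (M * t)"
  proof -
    have "(P * a * \<bar>r1 - r2\<bar>) / (P + E) \<le> (P * a * (m * (exp (M * t) / M))) / P"
      using P0 E0 assms rb m0 by (intro frac_le mult_left_mono mult_nonneg_nonneg) auto
    also have "\<dots> = a / M * m * exp (M * t)"
      using P0 by (simp add: field_simps)
    finally show ?thesis .
  qed
  finally show ?thesis unfolding diff by (simp add: algebra_simps)
qed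


lemma cont_int_max [continuous_intros]:
  fixes f :: "real \<Rightarrow> real"
  assumes "continuous_on UNIV f"
  shows "continuous_on S (\<lambda>t. integral {0..max 0 t} f)"
proof -
  have "continuous_on UNIV (\<lambda>t. integral {0..max 0 t} f)"
    unfolding continuous_on_eq_continuous_at[OF open_UNIV]
  proof safe
    fix x :: real
    define T where "T = \<bar>x\<bar> + 1"
    have c1: "continuous_on {0..T} (\<lambda>t. integral {0..t} f)"
      by (intro indefinite_integral_continuous_1 integrable_continuous_interval
          continuous_on_subset[OF assms]) auto
    have "continuous_on {-T..T} ((\<lambda>t. integral {0..t} f) \<circ> (\<lambda>t. max 0 t))"
      by (rule continuous_on_compose[OF _ continuous_on_subset[OF c1]]) (auto intro!: continuous_intros simp: T_def)
    moreover have "x \<in> interior {-T..T}" unfolding T_def by auto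
    ultimately show "isCont (\<lambda>t. integral {0..max 0 t} f) x"
      using continuous_on_interior by (fastforce simp: o_def)
  qed
  then show ?thesis by (rule continuous_on_subset) auto
qed

lemma F0bound:
  fixes a b c uL DH DL L0 M t :: real
  assumes "b > a" and "a > 0" and "DH > 0" and "DL > 0" and "L0 > 0" and "c > 0"
    and "M \<ge> 2 * b" and "t \<ge> 0"
  shows "exp (- M * t) * \<bar>Fop a b c uL DH DL L0 0 (\<lambda>_. 0) t\<bar>
     \<le> (\<bar>b * (- uL) - c\<bar> + L0 * c + L0 * DH * a) / DL"
proof -
  define C where "C = \<bar>b * (- uL) - c\<bar> + L0 * c + L0 * DH * a"
  define P where "P = Lpath a b L0 t * DH * exp (- a * t)"
  define E where "E = DL * exp (- b * t)"
  have P0: "P > 0" using assms by (simp add: P_def Lpath_def)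
  have E0: "E > 0" using assms by (simp add: E_def)
  have eb: "exp (b * t) \<ge> 1" using assms by simp
  have Lb: "Lpath a b L0 t \<le> L0 * exp (b * t)"
    using assms by (simp add: Lpath_def mult_left_mono mult_right_mono algebra_simps)
  have Pb: "P \<le> L0 * DH * exp (b * t)"
  proof -
    have "P = L0 * DH * exp ((b - a) * t + (- a * t))" unfolding P_def Lpath_def exp_add by simp
    also have "\<dots> \<le> L0 * DH * exp (b * t)"
      using assms by (intro mult_left_mono) (auto simp: algebra_simps)
    finally show ?thesis .
  qed
  have F: "Fop a b c uL DH DL L0 0 (\<lambda>_. 0) t = (b * (- uL) - c - Lpath a b L0 t * c - P * a) / (P + E)"
    unfolding Fop_def P_def E_def by (simp add: mult.commute mult.left_commute)
  have "\<bar>b * (- uL) - c - Lpath a b L0 t * c - P * a\<bar> \<le> \<bar>b * (- uL) - c\<bar> + Lpath a b L0 t * c + P * a"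
  proof -
    have "Lpath a b L0 t * c > 0" "P * a > 0" using P0 assms by (auto simp: Lpath_def)
    then show ?thesis by (smt (verit))
  qed
  also have "\<dots> \<le> \<bar>b * (- uL) - c\<bar> * exp (b * t) + L0 * exp (b * t) * c + L0 * DH * exp (b * t) * a"
  proof -
    have "\<bar>b * (- uL) - c\<bar> \<le> \<bar>b * (- uL) - c\<bar> * exp (b * t)"
      using mult_left_mono[OF eb, of "\<bar>b * (- uL) - c\<bar>"] by simp
    moreover have "Lpath a b L0 t * c \<le> L0 * exp (b * t) * c" using Lb assms by simp
    moreover have "P * a \<le> L0 * DH * exp (b * t) * a" using Pb assms by simp
    ultimately show ?thesis by linarith
  qed
  also have "\<dots> = C * exp (b * t)" by (simp add: C_def algebra_simps)
  finally have nb: "\<bar>b * (- uL) - c - Lpath a b L0 t * c - P * a\<bar> \<le> C * exp (b * t)" .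
  have "\<bar>Fop a b c uL DH DL L0 0 (\<lambda>_. 0) t\<bar> \<le> C * exp (b * t) / E"
    unfolding F using P0 E0 nb by (simp add: abs_divide) (intro frac_le, auto)
  also have "\<dots> = C * exp (2 * b * t) / DL"
    unfolding E_def using assms by (simp add: exp_minus field_simps flip: exp_add)
  finally have "exp (- M * t) * \<bar>Fop a b c uL DH DL L0 0 (\<lambda>_. 0) t\<bar> \<le> exp (- M * t) * (C * exp (2 * b * t) / DL)"
    by (rule mult_left_mono) auto
  also have "\<dots> = C * exp ((2 * b - M) * t) / DL"
    by (simp add: algebra_simps flip: exp_add)
  also have "\<dots> \<le> C / DL"
  proof -
    have "exp ((2 * b - M) * t) \<le> 1" using assms by (simp add: mult_nonpos_nonneg)
    moreover have "C \<ge> 0" using assms by (simp add: C_def)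
    ultimately show ?thesis using assms
      by (intro divide_right_mono) (auto intro: mult_left_le[of _ C, simplified])
  qed
  finally show ?thesis by (simp add: C_def)
qed

lemma sol_ftc:
  assumes "is_solution a b c uL DH DL L0 \<rho> \<rho>'" "t \<ge> 0"
  shows "\<rho> t = integral {0..t} \<rho>'" "continuous_on {0..t} \<rho>'"
proof -
  have d: "\<forall>x\<ge>0. (\<rho> has_real_derivative \<rho>' x) (at x within {0..})" and z: "\<rho> 0 = 0"
    and c: "continuous_on {0..} \<rho>'"
    using assms(1) unfolding is_solution_def by auto
  have "(\<rho>' has_integral (\<rho> t - \<rho> 0)) {0..t}"
  proof (rule fundamental_theorem_of_calculus[OF assms(2)])
    fix x assume "x \<in> {0..t}"
    then have "(\<rho> has_real_derivative \<rho>' x) (at x within {0..t})"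
      using d by (auto intro: DERIV_subset)
    then show "(\<rho> has_vector_derivative \<rho>' x) (at x within {0..t})"
      by (simp add: has_real_derivative_iff_has_vector_derivative)
  qed
  then show "\<rho> t = integral {0..t} \<rho>'" using z by (simp add: has_integral_iff)
  show "continuous_on {0..t} \<rho>'" using c by (rule continuous_on_subset) auto
qed

theorem lemma4:
  fixes a b c uL DH DL L0 :: real
  assumes "b > a" and "a > 0" and "c > 0" and "uL < 0"
    and "DH > 0" and "DL > 0" and "L0 > 0"
  shows "(\<exists>\<rho> \<rho>'. is_solution a b c uL DH DL L0 \<rho> \<rho>') \<and>
         (\<forall>\<rho>1 \<rho>1' \<rho>2 \<rho>2'. is_solution a b c uL DH DL L0 \<rho>1 \<rho>1' \<and>
              is_solution a b c uL DH DL L0 \<rho>2 \<rho>2' \<longrightarrow>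
              (\<forall>t\<ge>0. \<rho>1 t = \<rho>2 t))"
proof -
  define M where "M = 4 * (a + b)"
  define q where "q = b / (M - b) + a / M"
  have Mb: "M > b" "M \<ge> 2 * b" using assms by (auto simp: M_def)
  have q0: "q \<ge> 0" "q < 1"
  proof -
    have "b / (M - b) < 1 / 3" using assms by (simp add: M_def field_simps)
    moreover have "a / M < 1 / 4" using assms by (simp add: M_def field_simps)
    ultimately show "q < 1" unfolding q_def by linarith
    show "q \<ge> 0" unfolding q_def using assms Mb by simp
  qed
  show ?thesis
  proof
    show "\<exists>\<rho> \<rho>'. is_solution a b c uL DH DL L0 \<rho> \<rho>'"
    proof -
      define C0 where "C0 = (\<bar>b * (- uL) - c\<bar> + L0 * c + L0 * DH * a) / DL"
      define u where "u w s = exp (M * s) * apply_bcontfun w s" for w :: "real \<Rightarrow>\<^sub>C real" and s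
      define G where "G w t = exp (- M * max 0 t) * Fop a b c uL DH DL L0
          (integral {0..max 0 t} (u w)) (u w) (max 0 t)" for w t
      have ucont: "continuous_on S (u w)" for w S unfolding u_def by (auto intro!: continuous_intros)
      have dnz: "L0 * exp ((b - a) * max 0 x) * DH * exp (- (a * max 0 x)) +
          DL * exp (- (b * max 0 x)) \<noteq> 0" for x
      proof -
        have "L0 * exp ((b - a) * max 0 x) * DH * exp (- (a * max 0 x)) +
          DL * exp (- (b * max 0 x)) > 0" using assms by (intro add_pos_pos mult_pos_pos) auto
        then show ?thesis by simp
      qed
      have Gcont: "continuous_on UNIV (G w)" for w
        unfolding G_def Fop_def u_def using assms
        by (auto simp: Lpath_def dnz intro!: continuous_intros)
      have Fdiff: "\<bar>Fop a b c uL DH DL L0 (integral {0..t} (u w1)) (u w1) t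
                   - Fop a b c uL DH DL L0 (integral {0..t} (u w2)) (u w2) t\<bar>
                 \<le> q * dist w1 w2 * exp (M * t)" if t: "t \<ge> 0" for w1 w2 t
        unfolding q_def
      proof (rule est[OF assms(1,2,5,6,7) Mb(1) t ucont ucont])
        fix s
        have "\<bar>u w1 s - u w2 s\<bar> = exp (M * s) * dist (apply_bcontfun w1 s) (apply_bcontfun w2 s)"
          unfolding u_def dist_real_def by (simp add: abs_mult right_diff_distrib[symmetric])
        also have "\<dots> \<le> exp (M * s) * dist w1 w2" by (intro mult_left_mono dist_bounded) auto
        finally show "\<bar>u w1 s - u w2 s\<bar> \<le> dist w1 w2 * exp (M * s)" by (simp add: mult.commute)
      next
        show "integral {0..t} (u w1) - integral {0..t} (u w2) = integral {0..t} (\<lambda>s. u w1 s - u w2 s)"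
          by (intro integral_diff[symmetric] integrable_continuous_interval ucont)
      qed
      have Gbound: "norm (G w t) \<le> C0 + q * norm w" for w t
      proof -
        define t' where "t' = max 0 t"
        have t': "t' \<ge> 0" by (simp add: t'_def)
        have d: "\<bar>Fop a b c uL DH DL L0 (integral {0..t'} (u w)) (u w) t' - Fop a b c uL DH DL L0 0 (\<lambda>_. 0) t'\<bar>
              \<le> q * norm w * exp (M * t')"
          unfolding q_def
        proof (rule est[OF assms(1,2,5,6,7) Mb(1) t' ucont])
          show "continuous_on {0..t'} (\<lambda>_. 0::real)" by simp
          fix s
          have "\<bar>u w s - 0\<bar> = exp (M * s) * norm (apply_bcontfun w s)"
            unfolding u_def by (simp add: abs_mult)
          also have "\<dots> \<le> exp (M * s) * norm w" by (intro mult_left_mono norm_bounded) auto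
          finally show "\<bar>u w s - 0\<bar> \<le> norm w * exp (M * s)" by (simp add: mult.commute)
        qed simp
        have f0: "exp (- M * t') * \<bar>Fop a b c uL DH DL L0 0 (\<lambda>_. 0) t'\<bar> \<le> C0"
          unfolding C0_def by (rule F0bound[OF assms(1,2,5,6,7,3) Mb(2) t'])
        have "norm (G w t) = exp (- M * t') * \<bar>Fop a b c uL DH DL L0 (integral {0..t'} (u w)) (u w) t'\<bar>"
          unfolding G_def t'_def by (simp add: abs_mult)
        also have "\<dots> \<le> exp (- M * t') * (\<bar>Fop a b c uL DH DL L0 (integral {0..t'} (u w)) (u w) t' - Fop a b c uL DH DL L0 0 (\<lambda>_. 0) t'\<bar>
              + \<bar>Fop a b c uL DH DL L0 0 (\<lambda>_. 0) t'\<bar>)"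
          by (intro mult_left_mono) auto
        also have "\<dots> \<le> exp (- M * t') * (q * norm w * exp (M * t')) + C0"
          unfolding distrib_left by (intro add_mono mult_left_mono d f0) auto
        also have "\<dots> = C0 + q * norm w"
          by (simp add: exp_minus field_simps)
        finally show ?thesis .
      qed
      have Gin: "G w \<in> bcontfun" for w
        by (rule bcontfun_normI[OF Gcont Gbound])
      define f where "f w = Bcontfun (G w)" for w
      have fapp: "apply_bcontfun (f w) t = G w t" for w t
        unfolding f_def using Gin by (simp add: Bcontfun_inverse)
      have "\<exists>!w. f w = w"
      proof (rule banach_fix_type[OF q0(1) q0(2)], safe)
        fix w1 w2
        show "dist (f w1) (f w2) \<le> q * dist w1 w2"
        proof (rule dist_bound)
          fix t :: real
          define t' where "t' = max 0 t"
          have t': "t' \<ge> 0" by (simp add: t'_def)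
          have "dist (apply_bcontfun (f w1) t) (apply_bcontfun (f w2) t)
              = exp (- M * t') * \<bar>Fop a b c uL DH DL L0 (integral {0..t'} (u w1)) (u w1) t'
                   - Fop a b c uL DH DL L0 (integral {0..t'} (u w2)) (u w2) t'\<bar>"
            unfolding fapp G_def dist_real_def t'_def by (simp add: abs_mult right_diff_distrib[symmetric])
          also have "\<dots> \<le> exp (- M * t') * (q * dist w1 w2 * exp (M * t'))"
            by (intro mult_left_mono Fdiff t') auto
          also have "\<dots> = q * dist w1 w2" by (simp add: exp_minus field_simps)
          finally show "dist (apply_bcontfun (f w1) t) (apply_bcontfun (f w2) t) \<le> q * dist w1 w2" .
        qed
      qed
      then obtain w where w: "f w = w" by blast
      define v where "v = u w"
      define \<rho> where "\<rho> t = integral {0..t} v" for t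
      have vcont: "continuous_on S v" for S unfolding v_def by (rule ucont)
      have veq: "v t = Fop a b c uL DH DL L0 (\<rho> t) v t" if t: "t \<ge> 0" for t
      proof -
        have "apply_bcontfun w t = G w t" using fapp[of w t] w by simp
        then show ?thesis using t unfolding v_def \<rho>_def G_def
          by (simp add: u_def exp_minus field_simps)
      qed
      have "is_solution a b c uL DH DL L0 \<rho> v"
        unfolding is_solution_def
      proof (intro conjI allI impI)
        show "\<rho> 0 = 0" by (simp add: \<rho>_def)
        show "continuous_on {0..} v" by (rule vcont)
      next
        fix t :: real assume t: "t \<ge> 0"
        have "(\<rho> has_real_derivative v t) (at t within {0..t+1})"
          unfolding \<rho>_def using t by (intro integral_has_real_derivative vcont) auto
        moreover have "at t within {0..t+1} = at t within {0..}"
          by (rule at_within_nhd[of _ "{..<t+1}"]) auto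
        ultimately show "(\<rho> has_real_derivative v t) (at t within {0..})" by simp
      next
        fix t :: real assume t: "t \<ge> 0"
        show "v t = (b * (- uL) - c - Lpath a b L0 t * c
          + b * DL * integral {0..t} (\<lambda>s. exp (- b * s) * v s)
          - Lpath a b L0 t * DH * a * exp (- a * t) * (1 - \<rho> t))
        / (Lpath a b L0 t * DH * exp (- a * t) + DL * exp (- b * t))"
          using veq[OF t] unfolding Fop_def .
      qed
      then show ?thesis by blast
    qed
  next
    show "\<forall>\<rho>1 \<rho>1' \<rho>2 \<rho>2'. is_solution a b c uL DH DL L0 \<rho>1 \<rho>1' \<and>
              is_solution a b c uL DH DL L0 \<rho>2 \<rho>2' \<longrightarrow> (\<forall>t\<ge>0. \<rho>1 t = \<rho>2 t)"
    proof (intro allI impI, elim conjE)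
      fix \<rho>1 \<rho>1' \<rho>2 \<rho>2' :: "real \<Rightarrow> real"
      assume s1: "is_solution a b c uL DH DL L0 \<rho>1 \<rho>1'" and s2: "is_solution a b c uL DH DL L0 \<rho>2 \<rho>2'"
      have eq1: "\<rho>1' t = Fop a b c uL DH DL L0 (\<rho>1 t) \<rho>1' t" if "t \<ge> 0" for t
        using s1 that unfolding is_solution_def Fop_def by auto
      have eq2: "\<rho>2' t = Fop a b c uL DH DL L0 (\<rho>2 t) \<rho>2' t" if "t \<ge> 0" for t
        using s2 that unfolding is_solution_def Fop_def by auto
      have same: "\<rho>1' s = \<rho>2' s" if T: "T \<ge> 0" "s \<in> {0..T}" for T s
      proof -
        define g where "g s = exp (- M * s) * \<bar>\<rho>1' s - \<rho>2' s\<bar>" for s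
        have "continuous_on {0..T} g"
          unfolding g_def by (intro continuous_intros sol_ftc(2)[OF s1 T(1)] sol_ftc(2)[OF s2 T(1)])
        then obtain x where x: "x \<in> {0..T}" "\<And>y. y \<in> {0..T} \<Longrightarrow> g y \<le> g x"
          using continuous_attains_sup[of "{0..T}" g] T by auto
        define m where "m = g x"
        have m0: "m \<ge> 0" unfolding m_def g_def by simp
        have bd: "\<bar>\<rho>1' y - \<rho>2' y\<bar> \<le> m * exp (M * y)" if "y \<in> {0..T}" for y
        proof -
          have "g y \<le> m" using x(2)[OF that] by (simp add: m_def)
          then show ?thesis unfolding g_def by (simp add: field_simps exp_minus)
        qed
        have gq: "g y \<le> q * m" if y: "y \<in> {0..T}" for y
        proof -
          have y0: "y \<ge> 0" using y by auto
          have "\<bar>\<rho>1' y - \<rho>2' y\<bar> = \<bar>Fop a b c uL DH DL L0 (\<rho>1 y) \<rho>1' y - Fop a b c uL DH DL L0 (\<rho>2 y) \<rho>2' y\<bar>"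
            using eq1[OF y0] eq2[OF y0] by simp
          also have "\<dots> \<le> q * m * exp (M * y)" unfolding q_def
          proof (rule est[OF assms(1,2,5,6,7) Mb(1) y0 sol_ftc(2)[OF s1 y0] sol_ftc(2)[OF s2 y0]])
            show "\<And>s. s \<in> {0..y} \<Longrightarrow> \<bar>\<rho>1' s - \<rho>2' s\<bar> \<le> m * exp (M * s)"
              using bd y by auto
            show "\<rho>1 y - \<rho>2 y = integral {0..y} (\<lambda>s. \<rho>1' s - \<rho>2' s)"
              unfolding sol_ftc(1)[OF s1 y0] sol_ftc(1)[OF s2 y0]
              by (intro integral_diff[symmetric] integrable_continuous_interval sol_ftc(2)[OF s1 y0] sol_ftc(2)[OF s2 y0])
          qed
          finally show ?thesis unfolding g_def by (simp add: field_simps exp_minus)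
        qed
        have "m \<le> q * m" using gq[OF x(1)] by (simp add: m_def)
        then have "(1 - q) * m \<le> 0" by (simp add: algebra_simps)
        then have "m = 0" using mult_le_0_iff[of "1 - q" m] q0 m0 by auto
        then have "g s \<le> 0" using x(2)[OF T(2)] by (simp add: m_def)
        then show ?thesis unfolding g_def by (simp add: mult_le_0_iff)
      qed
      fix t :: real assume t: "t \<ge> 0"
      show "\<rho>1 t = \<rho>2 t"
        unfolding sol_ftc(1)[OF s1 t] sol_ftc(1)[OF s2 t]
        using same[OF t] by (intro integral_cong) auto
    qed
  qed
qed

end
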